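(* Let $A$ be a finite set, $n\in\mathbb N$, $\nu\in\Pr(A)$, $\mu\in\Pr(A^n)$, and $\delta:=\overline{d_n}(\mu,\nu^{\times n})$. Then $\mathrm{TC}(\mu)\le2\big(\mathrm H(\delta,1-\delta)+\delta\log|A|\big)n$.
   Context: $\overline{d_n}$ is the transportation metric on $\Pr(A^n)$ associated with the normalized Hamming metric $d_n(\mathbf a,\mathbf a')=|\{i:a_i\ne a'_i\}|/n$: $\overline{d_n}(\mu,\nu)=\inf\{\int d_n\,d\lambda:\lambda\text{ a coupling of }\mu,\nu\}$. $\mathrm{TC}(\mu)=\sum_i\mathrm H(\mu_{\{i\}})-\mathrm H(\mu)$ with $\mu_{\{i\}}$ the marginals; $\mathrm H(\delta,1-\delta)$ is the binary Shannon entropy; logarithms are natural. *)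

theory Defs
  imports "HOL-Analysis.Analysis"
begin

text \<open>A^n is represented as the set of lists of length n over the finite type 'a.\<close>
definition words :: "nat \<Rightarrow> 'a list set" where
  "words n = {xs. length xs = n}"

definition is_dist :: "'b set \<Rightarrow> ('b \<Rightarrow> real) \<Rightarrow> bool" where
  "is_dist S p \<longleftrightarrow> (\<forall>x\<in>S. p x \<ge> 0) \<and> (\<Sum>x\<in>S. p x) = 1"

definition hamming :: "nat \<Rightarrow> 'a list \<Rightarrow> 'a list \<Rightarrow> real" where
  "hamming n xs ys = real (card {i. i < n \<and> xs ! i \<noteq> ys ! i}) / real n"

definition coupling :: "nat \<Rightarrow> ('a list \<Rightarrow> real) \<Rightarrow> ('a list \<Rightarrow> real)
    \<Rightarrow> ('a list \<times> 'a list \<Rightarrow> real) \<Rightarrow> bool" where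
  "coupling n mu nu lam \<longleftrightarrow> is_dist (words n \<times> words n) lam
     \<and> (\<forall>xs\<in>words n. (\<Sum>ys\<in>words n. lam (xs, ys)) = mu xs)
     \<and> (\<forall>ys\<in>words n. (\<Sum>xs\<in>words n. lam (xs, ys)) = nu ys)"

definition dbar :: "nat \<Rightarrow> ('a list \<Rightarrow> real) \<Rightarrow> ('a list \<Rightarrow> real) \<Rightarrow> real" where
  "dbar n mu nu = Inf {(\<Sum>p\<in>words n \<times> words n. lam p * hamming n (fst p) (snd p)) | lam.
                        coupling n mu nu lam}"

text \<open>Shannon entropy (natural log; ln 0 = 0 in Isabelle so 0 ln 0 = 0).\<close>
definition entropy :: "'b set \<Rightarrow> ('b \<Rightarrow> real) \<Rightarrow> real" where
  "entropy S p = - (\<Sum>x\<in>S. p x * ln (p x))"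

definition marginal :: "nat \<Rightarrow> ('a list \<Rightarrow> real) \<Rightarrow> nat \<Rightarrow> 'a \<Rightarrow> real" where
  "marginal n mu i a = (\<Sum>xs\<in>{xs\<in>words n. xs ! i = a}. mu xs)"

definition total_correlation :: "nat \<Rightarrow> ('a::finite list \<Rightarrow> real) \<Rightarrow> real" where
  "total_correlation n mu = (\<Sum>i<n. entropy UNIV (marginal n mu i)) - entropy (words n) mu"

definition iid_power :: "nat \<Rightarrow> ('a \<Rightarrow> real) \<Rightarrow> 'a list \<Rightarrow> real" where
  "iid_power n nu xs = (\<Prod>i<n. nu (xs ! i))"

definition binary_entropy :: "real \<Rightarrow> real" where
  "binary_entropy d = - d * ln d - (1 - d) * ln (1 - d)"

end

theory Submission imports Defs "HOL-Real_Asymp.Real_Asymp" begin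

lemma finite_words: "finite (words n :: 'a::finite list set)"
  proof -
  have "finite {xs. set xs \<subseteq> (UNIV::'a set) \<and> length xs = n}"
    by (rule finite_lists_length_eq) simp
  then show ?thesis unfolding words_def by simp
qed

lemma words_Suc: "words (Suc n) = (\<lambda>(a,ys). a # ys) ` (UNIV \<times> words n)"
  unfolding words_def by (auto simp: length_Suc_conv image_iff)

lemma sum_words_prod:
  fixes f :: "nat \<Rightarrow> 'a::finite \<Rightarrow> real"
  shows "(\<Sum>y\<in>words n. \<Prod>j<n. f j (y!j)) = (\<Prod>j<n. \<Sum>a\<in>UNIV. f j a)"
proof (induction n arbitrary: f)
  case 0
  then show ?case by (simp add: words_def)
next
  case (Suc n)
  have inj: "inj_on (\<lambda>(a,ys). a # ys) (UNIV \<times> words n)"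
    by (auto simp: inj_on_def)
  have "(\<Sum>y\<in>words (Suc n). \<Prod>j<Suc n. f j (y!j))
      = (\<Sum>(a,ys)\<in>UNIV \<times> words n. \<Prod>j<Suc n. f j ((a#ys)!j))"
    unfolding words_Suc by (subst sum.reindex[OF inj]) (simp add: case_prod_beta)
  also have "\<dots> = (\<Sum>(a,ys)\<in>UNIV \<times> words n. f 0 a * (\<Prod>j<n. f (Suc j) (ys!j)))"
    by (rule sum.cong) (auto simp only: prod.lessThan_Suc_shift nth_Cons_0 nth_Cons_Suc)
  also have "\<dots> = (\<Sum>a\<in>UNIV. f 0 a * (\<Sum>ys\<in>words n. \<Prod>j<n. f (Suc j) (ys!j)))"
    by (simp add: sum.cartesian_product[symmetric] sum_distrib_left)
  also have "\<dots> = (\<Sum>a\<in>UNIV. f 0 a) * (\<Prod>j<n. \<Sum>a\<in>UNIV. f (Suc j) a)"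
    using Suc[of "\<lambda>j. f (Suc j)"] by (simp add: sum_distrib_right)
  also have "\<dots> = (\<Prod>j<Suc n. \<Sum>a\<in>UNIV. f j a)"
    by (simp only: prod.lessThan_Suc_shift)
  finally show ?case .
qed

lemma ent_regroup:
  fixes lam :: "'w \<Rightarrow> real" and Y :: "'w \<Rightarrow> 't" and beta :: "'t \<Rightarrow> real"
  assumes "finite Om" "finite T" "Y ` Om \<subseteq> T"
    and "\<And>t. t \<in> T \<Longrightarrow> beta t = (\<Sum>w\<in>{w\<in>Om. Y w = t}. lam w)"
  shows "entropy T beta = - (\<Sum>w\<in>Om. lam w * ln (beta (Y w)))"
proof -
  have "(\<Sum>t\<in>T. beta t * ln (beta t)) = (\<Sum>t\<in>T. \<Sum>w\<in>{w\<in>Om. Y w = t}. lam w * ln (beta (Y w)))"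
    using assms(4) by (auto simp: sum_distrib_right intro!: sum.cong)
  also have "\<dots> = (\<Sum>w\<in>Om. lam w * ln (beta (Y w)))"
    by (rule sum.group[OF assms(1-3)])
  finally show ?thesis unfolding entropy_def by simp
qed

lemma gibbs_core:
  fixes lam :: "'w \<Rightarrow> real" and X :: "'w \<Rightarrow> 's" and Y :: "'w \<Rightarrow> 't"
    and alpha :: "'s \<Rightarrow> real" and beta :: "'t \<Rightarrow> real" and q :: "'s \<Rightarrow> 't \<Rightarrow> real"
  assumes fin: "finite Om" "finite S" "finite T" and XS: "X ` Om \<subseteq> S" and YT: "Y ` Om \<subseteq> T"
    and nn: "\<And>w. w \<in> Om \<Longrightarrow> lam w \<ge> 0" and s1: "sum lam Om = 1"
    and al: "\<And>s. s \<in> S \<Longrightarrow> alpha s = (\<Sum>w\<in>{w\<in>Om. X w = s}. lam w)"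
    and be: "\<And>t. t \<in> T \<Longrightarrow> beta t = (\<Sum>w\<in>{w\<in>Om. Y w = t}. lam w)"
    and qnn: "\<And>s t. s \<in> S \<Longrightarrow> t \<in> T \<Longrightarrow> q s t \<ge> 0"
    and qs: "\<And>s. s \<in> S \<Longrightarrow> (\<Sum>t\<in>T. q s t) \<le> 1"
    and qpos: "\<And>w. w \<in> Om \<Longrightarrow> lam w > 0 \<Longrightarrow> q (X w) (Y w) > 0"
  shows "- (\<Sum>w\<in>Om. lam w * ln (beta (Y w)))
         \<le> - (\<Sum>w\<in>Om. lam w * ln (alpha (X w))) - (\<Sum>w\<in>Om. lam w * ln (q (X w) (Y w)))"
proof -
  define G where "G s t = (\<Sum>w\<in>{w\<in>Om. X w = s \<and> Y w = t}. lam w)" for s t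
  define H where "H s t = alpha s * q s t / G s t" for s t
  have anneg: "alpha s \<ge> 0" if "s \<in> S" for s using al[OF that] nn by (auto intro: sum_nonneg)
  have Gnn: "G s t \<ge> 0" for s t unfolding G_def using nn by (auto intro: sum_nonneg)
  have key: "lam w * (ln (alpha (X w)) + ln (q (X w) (Y w)) - ln (beta (Y w)))
      \<le> lam w * H (X w) (Y w) - lam w" if w: "w \<in> Om" for w
  proof (cases "lam w = 0")
    case True then show ?thesis by simp
  next
    case False
    then have lp: "lam w > 0" using nn[OF w] by simp
    have XwS: "X w \<in> S" and YwT: "Y w \<in> T" using w XS YT by auto
    have g1: "lam w \<le> G (X w) (Y w)" unfolding G_def
      by (rule member_le_sum) (use w nn fin in auto)
    have g2: "G (X w) (Y w) \<le> beta (Y w)" unfolding G_def be[OF YwT]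
      by (rule sum_mono2) (use fin nn in auto)
    have g3: "lam w \<le> alpha (X w)" unfolding al[OF XwS]
      by (rule member_le_sum) (use w nn fin in auto)
    have qp: "q (X w) (Y w) > 0" using qpos[OF w lp] .
    have gp: "G (X w) (Y w) > 0" using g1 lp by linarith
    have ap: "alpha (X w) > 0" using g3 lp by linarith
    have "ln (G (X w) (Y w)) \<le> ln (beta (Y w))" using g2 gp by simp
    moreover have "ln (alpha (X w)) + ln (q (X w) (Y w)) - ln (G (X w) (Y w)) = ln (H (X w) (Y w))"
      unfolding H_def using ap qp gp by (simp add: ln_mult ln_div)
    moreover have "ln (H (X w) (Y w)) \<le> H (X w) (Y w) - 1"
      by (rule ln_le_minus_one) (use ap qp gp in \<open>simp add: H_def\<close>)
    ultimately have "ln (alpha (X w)) + ln (q (X w) (Y w)) - ln (beta (Y w)) \<le> H (X w) (Y w) - 1"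
      by linarith
    then have "lam w * (ln (alpha (X w)) + ln (q (X w) (Y w)) - ln (beta (Y w))) \<le> lam w * (H (X w) (Y w) - 1)"
      using lp by (intro mult_left_mono) auto
    then show ?thesis by (simp add: algebra_simps)
  qed
  have "(\<Sum>w\<in>Om. lam w * H (X w) (Y w))
      = (\<Sum>p\<in>S \<times> T. \<Sum>w\<in>{w\<in>Om. (X w, Y w) = p}. lam w * H (X w) (Y w))"
    by (rule sum.group[symmetric]) (use fin XS YT in auto)
  also have "\<dots> = (\<Sum>p\<in>S \<times> T. \<Sum>w\<in>{w\<in>Om. (X w, Y w) = p}. lam w * H (fst p) (snd p))"
    by (intro sum.cong refl) auto
  also have "\<dots> = (\<Sum>p\<in>S \<times> T. G (fst p) (snd p) * H (fst p) (snd p))"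
    unfolding G_def sum_distrib_right
    by (intro sum.cong refl) (auto intro!: sum.cong)
  also have "\<dots> \<le> (\<Sum>p\<in>S \<times> T. alpha (fst p) * q (fst p) (snd p))"
  proof (rule sum_mono)
    fix p assume p: "p \<in> S \<times> T"
    show "G (fst p) (snd p) * H (fst p) (snd p) \<le> alpha (fst p) * q (fst p) (snd p)"
    proof (cases "G (fst p) (snd p) = 0")
      case True then show ?thesis using anneg qnn p by (auto intro: mult_nonneg_nonneg)
    next
      case False then show ?thesis by (simp add: H_def)
    qed
  qed
  also have "\<dots> = (\<Sum>s\<in>S. \<Sum>t\<in>T. alpha s * q s t)"
    by (simp add: sum.cartesian_product split_def)
  also have "\<dots> = (\<Sum>s\<in>S. alpha s * (\<Sum>t\<in>T. q s t))"
    by (simp add: sum_distrib_left)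
  also have "\<dots> \<le> (\<Sum>s\<in>S. alpha s)"
    by (rule sum_mono) (use anneg qs in \<open>auto intro: mult_left_le\<close>)
  also have "\<dots> = sum lam Om"
  proof -
    have "(\<Sum>s\<in>S. alpha s) = (\<Sum>s\<in>S. \<Sum>w\<in>{w\<in>Om. X w = s}. lam w)"
      using al by (auto intro!: sum.cong)
    also have "\<dots> = sum lam Om" by (rule sum.group) (use fin XS in auto)
    finally show ?thesis .
  qed
  finally have Hle: "(\<Sum>w\<in>Om. lam w * H (X w) (Y w)) \<le> 1" using s1 by simp
  have "(\<Sum>w\<in>Om. lam w * (ln (alpha (X w)) + ln (q (X w) (Y w)) - ln (beta (Y w))))
      \<le> (\<Sum>w\<in>Om. lam w * H (X w) (Y w) - lam w)"
    by (rule sum_mono) (rule key)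
  also have "\<dots> \<le> 0" using Hle s1 by (simp add: sum_subtractf)
  finally show ?thesis
    by (simp add: algebra_simps sum.distrib sum_subtractf)
qed

lemma sum_filter_fst:
  assumes "finite A" "finite B"
  shows "(\<Sum>w\<in>{w\<in>A \<times> B. P (fst w)}. f w) = (\<Sum>a\<in>{a\<in>A. P a}. \<Sum>b\<in>B. f (a,b))"
proof -
  have "{w\<in>A \<times> B. P (fst w)} = {a\<in>A. P a} \<times> B" by auto
  then show ?thesis using assms by (simp add: sum.cartesian_product)
qed

lemma sum_filter_snd:
  assumes "finite A" "finite B"
  shows "(\<Sum>w\<in>{w\<in>A \<times> B. P (snd w)}. f w) = (\<Sum>b\<in>{b\<in>B. P b}. \<Sum>a\<in>A. f (a,b))"
proof -
  have "{w\<in>A \<times> B. P (snd w)} = A \<times> {b\<in>B. P b}" by auto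
  then have "(\<Sum>w\<in>{w\<in>A \<times> B. P (snd w)}. f w) = (\<Sum>a\<in>A. \<Sum>b\<in>{b\<in>B. P b}. f (a,b))"
    using assms by (simp add: sum.cartesian_product)
  then show ?thesis by (simp add: sum.swap[of _ A])
qed

lemma iid_sum:
  fixes nu :: "'a::finite \<Rightarrow> real"
  assumes nu: "is_dist UNIV nu"
  shows "(\<Sum>y\<in>words n. iid_power n nu y) = 1"
  using sum_words_prod[of "\<lambda>j. nu" n] nu unfolding iid_power_def is_dist_def by simp

lemma iid_coord:
  fixes nu :: "'a::finite \<Rightarrow> real"
  assumes nu: "is_dist UNIV nu" and i: "i < n"
  shows "(\<Sum>y\<in>{y\<in>words n. y ! i = a}. iid_power n nu y) = nu a"
proof -
  define f where "f j b = (if j = i \<and> b \<noteq> a then 0 else nu b)" for j b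
  have "(\<Sum>y\<in>{y\<in>words n. y ! i = a}. iid_power n nu y)
      = (\<Sum>y\<in>words n. if y ! i = a then iid_power n nu y else 0)"
    by (simp add: sum.inter_filter[OF finite_words])
  also have "\<dots> = (\<Sum>y\<in>words n. \<Prod>j<n. f j (y!j))"
  proof (rule sum.cong[OF refl])
    fix y :: "'a list"
    show "(if y ! i = a then iid_power n nu y else 0) = (\<Prod>j<n. f j (y!j))"
    proof (cases "y ! i = a")
      case True then show ?thesis unfolding iid_power_def f_def by (auto intro!: prod.cong)
    next
      case False
      then have "f i (y!i) = 0" by (simp add: f_def)
      then have "(\<Prod>j<n. f j (y!j)) = 0" using i by (intro prod_zero) auto
      then show ?thesis using False by simp
    qed
  qed
  also have "\<dots> = (\<Prod>j<n. \<Sum>b\<in>UNIV. f j b)" by (rule sum_words_prod)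
  also have "\<dots> = (\<Prod>j<n. if j = i then nu a else 1)"
  proof (rule prod.cong[OF refl])
    fix j assume "j \<in> {..<n}"
    show "(\<Sum>b\<in>UNIV. f j b) = (if j = i then nu a else 1)"
    proof (cases "j = i")
      case True
      then have "(\<Sum>b\<in>UNIV. f j b) = (\<Sum>b\<in>UNIV. if b = a then nu b else 0)"
        unfolding f_def by (intro sum.cong) auto
      then show ?thesis using True by simp
    next
      case False then show ?thesis using nu unfolding f_def is_dist_def by simp
    qed
  qed
  also have "\<dots> = nu a" using i by (simp add: prod.delta)
  finally show ?thesis .
qed

lemma main_coupling:
  fixes nu :: "'a::finite \<Rightarrow> real" and mu :: "'a list \<Rightarrow> real" and n :: nat
    and lam :: "'a list \<times> 'a list \<Rightarrow> real"
  assumes nu: "is_dist UNIV nu" and cp: "coupling n mu (iid_power n nu) lam" and npos: "n > 0"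
  defines "c \<equiv> (\<Sum>p\<in>words n \<times> words n. lam p * hamming n (fst p) (snd p))"
  shows "total_correlation n mu \<le> 2 * (binary_entropy c + c * ln (real CARD('a))) * real n"
proof -
  define W where "W = (words n :: 'a list set)"
  define Om where "Om = W \<times> W"
  define pi where "pi = iid_power n nu"
  define K where "K = real CARD('a)"
  define d where "d w = real (card {i. i < n \<and> fst w ! i \<noteq> snd w ! i})" for w :: "'a list \<times> 'a list"
  define r where "r a b = (if a = b then 1 - c else c / K)" for a b :: 'a
  define B where "B = binary_entropy c + c * ln K"
  have finW: "finite W" unfolding W_def by (rule finite_words)
  have finOm: "finite Om" unfolding Om_def using finW by simp
  have Kpos: "K > 0" unfolding K_def by simp
  have lnn: "\<And>w. w \<in> Om \<Longrightarrow> lam w \<ge> 0" and l1: "sum lam Om = 1"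
    using cp unfolding coupling_def is_dist_def Om_def W_def by auto
  have mu_eq: "\<And>x. x \<in> W \<Longrightarrow> mu x = (\<Sum>y\<in>W. lam (x, y))"
    and pi_eq: "\<And>y. y \<in> W \<Longrightarrow> pi y = (\<Sum>x\<in>W. lam (x, y))"
    using cp unfolding coupling_def W_def pi_def by auto
  have dle: "d w \<le> real n" for w
  proof -
    have "card {i. i < n \<and> fst w ! i \<noteq> snd w ! i} \<le> card {..<n}" by (rule card_mono) auto
    then show ?thesis unfolding d_def by simp
  qed
  have dnn: "d w \<ge> 0" for w unfolding d_def by simp
  have c_eq: "c * real n = (\<Sum>w\<in>Om. lam w * d w)"
    unfolding c_def Om_def W_def hamming_def d_def using npos
    by (simp add: sum_distrib_right)
  have c_nn: "c \<ge> 0"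
  proof -
    have "(\<Sum>w\<in>Om. lam w * d w) \<ge> 0" using lnn dnn by (intro sum_nonneg) auto
    then have "0 \<le> c * real n" using c_eq by simp
    then show ?thesis using npos by (simp add: zero_le_mult_iff)
  qed
  have c_le: "c \<le> 1"
  proof -
    have "(\<Sum>w\<in>Om. lam w * d w) \<le> (\<Sum>w\<in>Om. lam w * real n)"
      using lnn dle by (intro sum_mono mult_left_mono) auto
    also have "\<dots> = real n" using l1 by (simp add: sum_distrib_right[symmetric])
    finally have "c * real n \<le> 1 * real n" using c_eq by simp
    then show ?thesis using npos by (simp add: mult_le_cancel_right)
  qed
  have nu_marg: "nu a = (\<Sum>w\<in>{w\<in>Om. snd w ! i = a}. lam w)" if i: "i < n" for i a
  proof -
    have "(\<Sum>w\<in>{w\<in>Om. snd w ! i = a}. lam w) = (\<Sum>y\<in>{y\<in>W. y ! i = a}. \<Sum>x\<in>W. lam (x, y))"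
      unfolding Om_def by (rule sum_filter_snd[OF finW finW])
    also have "\<dots> = (\<Sum>y\<in>{y\<in>W. y ! i = a}. pi y)" using pi_eq by (auto intro!: sum.cong)
    also have "\<dots> = nu a" unfolding W_def pi_def by (rule iid_coord[OF nu i])
    finally show ?thesis by simp
  qed
  have mu_marg: "marginal n mu i t = (\<Sum>w\<in>{w\<in>Om. fst w ! i = t}. lam w)" for i t
  proof -
    have "(\<Sum>w\<in>{w\<in>Om. fst w ! i = t}. lam w) = (\<Sum>x\<in>{x\<in>W. x ! i = t}. \<Sum>y\<in>W. lam (x, y))"
      unfolding Om_def by (rule sum_filter_fst[OF finW finW])
    also have "\<dots> = (\<Sum>x\<in>{x\<in>W. x ! i = t}. mu x)" using mu_eq by (auto intro!: sum.cong)
    finally show ?thesis unfolding marginal_def W_def by simp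
  qed
  have mu_fib: "mu x = (\<Sum>w\<in>{w\<in>Om. fst w = x}. lam w)" if "x \<in> W" for x
  proof -
    have "(\<Sum>w\<in>{w\<in>Om. fst w = x}. lam w) = (\<Sum>a\<in>{a\<in>W. a = x}. \<Sum>y\<in>W. lam (a, y))"
      unfolding Om_def by (rule sum_filter_fst[OF finW finW])
    also have "{a\<in>W. a = x} = {x}" using that by auto
    finally show ?thesis using mu_eq[OF that] by simp
  qed
  have pi_fib: "pi y = (\<Sum>w\<in>{w\<in>Om. snd w = y}. lam w)" if "y \<in> W" for y
  proof -
    have "(\<Sum>w\<in>{w\<in>Om. snd w = y}. lam w) = (\<Sum>b\<in>{b\<in>W. b = y}. \<Sum>x\<in>W. lam (x, b))"
      unfolding Om_def by (rule sum_filter_snd[OF finW finW])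
    also have "{b\<in>W. b = y} = {y}" using that by auto
    finally show ?thesis using pi_eq[OF that] by simp
  qed
  have rnn: "r a b \<ge> 0" for a b unfolding r_def using c_nn c_le Kpos by auto
  have rsum: "(\<Sum>b\<in>UNIV. r a b) \<le> 1" for a
  proof -
    have "(\<Sum>b\<in>UNIV. r a b) = r a a + (\<Sum>b\<in>UNIV - {a}. r a b)"
      by (simp add: sum.remove)
    also have "(\<Sum>b\<in>UNIV - {a}. r a b) = (K - 1) * (c / K)"
      unfolding r_def K_def by (simp add: card_Diff_subset)
    also have "r a a = 1 - c" unfolding r_def by simp
    finally have "(\<Sum>b\<in>UNIV. r a b) = 1 - c / K" using Kpos by (simp add: field_simps)
    then show ?thesis using c_nn Kpos by simp
  qed
  have rsum': "(\<Sum>b\<in>UNIV. r b a) \<le> 1" for a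
  proof -
    have "(\<Sum>b\<in>UNIV. r b a) = (\<Sum>b\<in>UNIV. r a b)" unfolding r_def by (intro sum.cong) auto
    then show ?thesis using rsum by simp
  qed
  have rpos: "r (fst w ! i) (snd w ! i) > 0" if w: "w \<in> Om" and lp: "lam w > 0" and i: "i < n" for w i
  proof (cases "fst w ! i = snd w ! i")
    case False
    have "card {j. j < n \<and> fst w ! j \<noteq> snd w ! j} \<ge> 1"
    proof -
      have "{i} \<subseteq> {j. j < n \<and> fst w ! j \<noteq> snd w ! j}" using i False by auto
      from card_mono[OF _ this] show ?thesis by simp
    qed
    then have "d w \<ge> 1" unfolding d_def by simp
    then have "lam w * d w > 0" using lp by simp
    also have "lam w * d w \<le> (\<Sum>w\<in>Om. lam w * d w)"
      by (rule member_le_sum) (use w lnn dnn finOm in auto)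
    finally have "c * real n > 0" using c_eq by simp
    then have "c > 0" using npos by (simp add: zero_less_mult_iff)
    then show ?thesis using False Kpos unfolding r_def by simp
  next
    case True
    have "card {j. j < n \<and> fst w ! j \<noteq> snd w ! j} \<le> card ({..<n} - {i})"
      by (rule card_mono) (use True in auto)
    then have "d w \<le> real n - 1" unfolding d_def using i by simp
    then have "lam w * (real n - d w) > 0" using lp by simp
    also have "lam w * (real n - d w) \<le> (\<Sum>w\<in>Om. lam w * (real n - d w))"
      by (rule member_le_sum) (use w lnn dle finOm in auto)
    also have "\<dots> = real n - c * real n" using l1 c_eq
      by (simp add: right_diff_distrib sum_subtractf sum_distrib_right[symmetric] sum_distrib_left[symmetric] mult.commute)
    finally have "c < 1" using npos
      by (metis diff_gt_0_iff_gt mult.commute mult.right_neutral mult_less_cancel_left_pos of_nat_0_less_iff)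
    then show ?thesis using True unfolding r_def by simp
  qed
  have lnsum: "(\<Sum>i<n. ln (r (fst w ! i) (snd w ! i))) = (real n - d w) * ln (1 - c) + d w * ln (c / K)" for w
  proof -
    define P where "P i = (fst w ! i = snd w ! i)" for i
    have "(\<Sum>i<n. ln (r (fst w ! i) (snd w ! i))) = (\<Sum>i<n. if P i then ln (1 - c) else ln (c / K))"
      unfolding r_def P_def by (intro sum.cong) auto
    also have "\<dots> = real (card ({..<n} \<inter> {i. P i})) * ln (1 - c) + real (card ({..<n} \<inter> - {i. P i})) * ln (c / K)"
      by (simp add: sum.If_cases)
    also have "{..<n} \<inter> - {i. P i} = {i. i < n \<and> fst w ! i \<noteq> snd w ! i}" unfolding P_def by auto
    also have "card ({..<n} \<inter> {i. P i}) = n - card {i. i < n \<and> fst w ! i \<noteq> snd w ! i}"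
    proof -
      have "card ({..<n} \<inter> {i. P i}) + card ({..<n} \<inter> - {i. P i}) = card (({..<n} \<inter> {i. P i}) \<union> ({..<n} \<inter> - {i. P i}))"
        by (rule card_Un_disjoint[symmetric]) auto
      also have "({..<n} \<inter> {i. P i}) \<union> ({..<n} \<inter> - {i. P i}) = {..<n}" by auto
      finally show ?thesis using \<open>{..<n} \<inter> - {i. P i} = {i. i < n \<and> fst w ! i \<noteq> snd w ! i}\<close> by simp
    qed
    moreover have "card {i. i < n \<and> fst w ! i \<noteq> snd w ! i} \<le> n"
      using card_mono[of "{..<n}" "{i. i < n \<and> fst w ! i \<noteq> snd w ! i}"] by auto
    ultimately show ?thesis unfolding d_def by (simp add: of_nat_diff)
  qed
  have clnK: "c * ln (c / K) = c * ln c - c * ln K"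
  proof (cases "c = 0")
    case False then show ?thesis using c_nn Kpos by (simp add: ln_div right_diff_distrib)
  qed simp
  have Dtot: "(\<Sum>w\<in>Om. lam w * (\<Sum>i<n. ln (r (fst w ! i) (snd w ! i)))) = - real n * B"
  proof -
    have "(\<Sum>w\<in>Om. lam w * (\<Sum>i<n. ln (r (fst w ! i) (snd w ! i))))
        = (\<Sum>w\<in>Om. real n * ln (1 - c) * lam w + (ln (c / K) - ln (1 - c)) * (lam w * d w))"
    proof (intro sum.cong refl)
      fix w assume "w \<in> Om"
      show "lam w * (\<Sum>i<n. ln (r (fst w ! i) (snd w ! i)))
          = real n * ln (1 - c) * lam w + (ln (c / K) - ln (1 - c)) * (lam w * d w)"
        unfolding lnsum[of w] by (simp add: algebra_simps)
    qed
    also have "\<dots> = real n * ln (1 - c) + (ln (c / K) - ln (1 - c)) * (c * real n)"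
      using l1 c_eq by (simp add: sum.distrib sum_distrib_left[symmetric])
    also have "\<dots> = real n * ((1 - c) * ln (1 - c) + c * ln (c / K))"
      by (simp add: algebra_simps)
    also have "\<dots> = real n * ((1 - c) * ln (1 - c) + (c * ln c - c * ln K))"
      unfolding clnK ..
    also have "\<dots> = - real n * B"
      unfolding B_def binary_entropy_def by (simp add: algebra_simps)
    finally show ?thesis .
  qed
  have OmW: "fst w \<in> W" "snd w \<in> W" if "w \<in> Om" for w using that unfolding Om_def by auto
  have lenW: "length y = n" if "y \<in> W" for y using that unfolding W_def words_def by simp
  have part1: "entropy UNIV (marginal n mu i) \<le> entropy UNIV nu - (\<Sum>w\<in>Om. lam w * ln (r (fst w ! i) (snd w ! i)))"
    if i: "i < n" for i
  proof -
    have e1: "entropy UNIV (marginal n mu i) = - (\<Sum>w\<in>Om. lam w * ln (marginal n mu i (fst w ! i)))"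
      by (rule ent_regroup[OF finOm]) (auto simp: mu_marg)
    have e2: "entropy UNIV nu = - (\<Sum>w\<in>Om. lam w * ln (nu (snd w ! i)))"
      by (rule ent_regroup[OF finOm]) (auto simp: nu_marg[OF i])
    have "- (\<Sum>w\<in>Om. lam w * ln (marginal n mu i (fst w ! i)))
        \<le> - (\<Sum>w\<in>Om. lam w * ln (nu (snd w ! i))) - (\<Sum>w\<in>Om. lam w * ln ((\<lambda>s t. r t s) (snd w ! i) (fst w ! i)))"
      by (rule gibbs_core[where S=UNIV and T=UNIV]) (use finOm lnn l1 nu_marg[OF i] mu_marg rnn rsum' rpos i in auto)
    then show ?thesis using e1 e2 by simp
  qed
  have sum1: "(\<Sum>i<n. entropy UNIV (marginal n mu i)) \<le> real n * entropy UNIV nu + real n * B"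
  proof -
    have "(\<Sum>i<n. entropy UNIV (marginal n mu i))
        \<le> (\<Sum>i<n. entropy UNIV nu - (\<Sum>w\<in>Om. lam w * ln (r (fst w ! i) (snd w ! i))))"
      by (rule sum_mono) (use part1 in auto)
    also have "\<dots> = real n * entropy UNIV nu - (\<Sum>w\<in>Om. lam w * (\<Sum>i<n. ln (r (fst w ! i) (snd w ! i))))"
      by (simp add: sum_subtractf sum_distrib_left sum.swap[of _ "{..<n}"])
    finally show ?thesis using Dtot by simp
  qed
  define q where "q x y = (\<Prod>i<n. r (x ! i) (y ! i))" for x y :: "'a list"
  have qnn: "q x y \<ge> 0" for x y unfolding q_def using rnn by (intro prod_nonneg) auto
  have qsum: "(\<Sum>y\<in>W. q x y) \<le> 1" for x
  proof -
    have "(\<Sum>y\<in>W. q x y) = (\<Prod>j<n. \<Sum>b\<in>UNIV. r (x ! j) b)"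
      unfolding q_def W_def by (rule sum_words_prod)
    also have "\<dots> \<le> 1" using rsum rnn by (intro prod_le_1) (auto intro: sum_nonneg)
    finally show ?thesis .
  qed
  have qpos: "q (fst w) (snd w) > 0" if "w \<in> Om" "lam w > 0" for w
    unfolding q_def using rpos[OF that] by (intro prod_pos) auto
  have g2: "- (\<Sum>w\<in>Om. lam w * ln (pi (snd w)))
      \<le> - (\<Sum>w\<in>Om. lam w * ln (mu (fst w))) - (\<Sum>w\<in>Om. lam w * ln (q (fst w) (snd w)))"
    by (rule gibbs_core[where S=W and T=W]) (use finOm finW lnn l1 mu_fib pi_fib qnn qsum qpos OmW in auto)
  have emu: "entropy (words n) mu = - (\<Sum>w\<in>Om. lam w * ln (mu (fst w)))"
    unfolding W_def[symmetric] by (rule ent_regroup[OF finOm finW]) (use mu_fib OmW in auto)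
  have lnq: "(\<Sum>w\<in>Om. lam w * ln (q (fst w) (snd w))) = (\<Sum>w\<in>Om. lam w * (\<Sum>i<n. ln (r (fst w ! i) (snd w ! i))))"
  proof (intro sum.cong refl)
    fix w assume w: "w \<in> Om"
    show "lam w * ln (q (fst w) (snd w)) = lam w * (\<Sum>i<n. ln (r (fst w ! i) (snd w ! i)))"
    proof (cases "lam w > 0")
      case True
      have "\<And>i. i < n \<Longrightarrow> r (fst w ! i) (snd w ! i) \<noteq> 0" using rpos[OF w True] by fastforce
      then show ?thesis unfolding q_def by (subst ln_prod) auto
    next
      case False then have "lam w = 0" using lnn[OF w] by simp
      then show ?thesis by simp
    qed
  qed
  have lnpi: "(\<Sum>w\<in>Om. lam w * ln (pi (snd w))) = - real n * entropy UNIV nu"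
  proof -
    have "(\<Sum>w\<in>Om. lam w * ln (pi (snd w))) = (\<Sum>w\<in>Om. lam w * (\<Sum>j<n. ln (nu (snd w ! j))))"
    proof (intro sum.cong refl)
      fix w assume w: "w \<in> Om"
      show "lam w * ln (pi (snd w)) = lam w * (\<Sum>j<n. ln (nu (snd w ! j)))"
      proof (cases "lam w > 0")
        case True
        have "lam w \<le> pi (snd w)" unfolding pi_fib[OF OmW(2)[OF w]]
          by (rule member_le_sum) (use w lnn finOm in auto)
        then have "pi (snd w) \<noteq> 0" using True by simp
        then have "\<forall>j<n. nu (snd w ! j) \<noteq> 0" unfolding pi_def iid_power_def by auto
        then show ?thesis unfolding pi_def iid_power_def by (subst ln_prod) auto
      next
        case False then have "lam w = 0" using lnn[OF w] by simp
        then show ?thesis by simp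
      qed
    qed
    also have "\<dots> = (\<Sum>j<n. \<Sum>w\<in>Om. lam w * ln (nu (snd w ! j)))"
      by (simp add: sum_distrib_left sum.swap[of _ Om])
    also have "\<dots> = (\<Sum>j<n. - entropy UNIV nu)"
    proof (intro sum.cong refl)
      fix j assume "j \<in> {..<n}"
      then have j: "j < n" by simp
      have "entropy UNIV nu = - (\<Sum>w\<in>Om. lam w * ln (nu (snd w ! j)))"
        by (rule ent_regroup[OF finOm]) (auto simp: nu_marg[OF j])
      then show "(\<Sum>w\<in>Om. lam w * ln (nu (snd w ! j))) = - entropy UNIV nu" by simp
    qed
    finally show ?thesis by simp
  qed
  have "total_correlation n mu \<le> (real n * entropy UNIV nu + real n * B) - (real n * entropy UNIV nu - real n * B)"
    unfolding total_correlation_def using sum1 g2 emu lnq lnpi Dtot by (simp only:)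
  then show ?thesis unfolding B_def K_def by (simp add: algebra_simps)
qed

lemma cost_bounds:
  fixes lam :: "'a::finite list \<times> 'a list \<Rightarrow> real"
  assumes cp: "coupling n mu nu' lam" and npos: "n > 0"
  shows "(\<Sum>p\<in>words n \<times> words n. lam p * hamming n (fst p) (snd p)) \<in> {0..1}"
proof -
  have lnn: "\<And>w. w \<in> words n \<times> words n \<Longrightarrow> lam w \<ge> 0" and l1: "sum lam (words n \<times> words n) = 1"
    using cp unfolding coupling_def is_dist_def by auto
  have h: "hamming n x y \<in> {0..1}" for x y :: "'a list"
  proof -
    have "card {i. i < n \<and> x ! i \<noteq> y ! i} \<le> card {..<n}" by (rule card_mono) auto
    then show ?thesis unfolding hamming_def using npos by simp
  qed
  have "(\<Sum>p\<in>words n \<times> words n. lam p * hamming n (fst p) (snd p)) \<ge> 0"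
    using lnn h by (intro sum_nonneg mult_nonneg_nonneg) auto
  moreover have "(\<Sum>p\<in>words n \<times> words n. lam p * hamming n (fst p) (snd p)) \<le> (\<Sum>p\<in>words n \<times> words n. lam p)"
    using lnn h by (intro sum_mono mult_right_le_one_le) auto
  ultimately show ?thesis using l1 by simp
qed

lemma xlnx_cont: "continuous_on {0..1} (\<lambda>x::real. x * ln x)"
proof (rule continuous_on_eq_continuous_within[THEN iffD2], intro ballI)
  fix x :: real assume x: "x \<in> {0..1}"
  show "continuous (at x within {0..1}) (\<lambda>x::real. x * ln x)"
  proof (cases "x = 0")
    case True
    have "((\<lambda>x::real. x * ln x) \<longlongrightarrow> 0) (at_right 0)" by real_asymp
    then have "((\<lambda>x::real. x * ln x) \<longlongrightarrow> 0) (at 0 within {0..1})"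
      by (simp add: at_within_Icc_at_right)
    then show ?thesis using True by (simp add: continuous_within)
  next
    case False
    then have "x > 0" using x by auto
    then show ?thesis
      apply (rule_tac continuous_at_imp_continuous_within)
      apply (rule continuous_mult)
       apply (rule continuous_ident)
      apply (rule continuous_ln)
       apply (rule continuous_ident)
      apply simp
      done
  qed
qed

lemma bent_cont: "continuous_on {0..1} binary_entropy"
proof -
  have a: "continuous_on {0..1} (\<lambda>c::real. (1 - c) * ln (1 - c))"
    by (rule continuous_on_compose2[OF xlnx_cont]) (auto intro!: continuous_on_diff continuous_on_const continuous_on_id)
  have "continuous_on {0..1} (\<lambda>c::real. - (c * ln c) - (1 - c) * ln (1 - c))"
    by (intro continuous_on_diff continuous_on_minus xlnx_cont a)
  moreover have "binary_entropy = (\<lambda>c::real. - (c * ln c) - (1 - c) * ln (1 - c))"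
    by (rule ext) (simp add: binary_entropy_def)
  ultimately show ?thesis by (simp only:)
qed

theorem lemma4p4:
  fixes nu :: "'a::finite \<Rightarrow> real" and mu :: "'a list \<Rightarrow> real" and n :: nat
  assumes "is_dist UNIV nu" and "is_dist (words n) mu"
  shows "let \<delta> = dbar n mu (iid_power n nu) in
         total_correlation n mu \<le> 2 * (binary_entropy \<delta> + \<delta> * ln (real CARD('a))) * real n"
proof (cases "n = 0")
  case True
  have "words 0 = {[] :: 'a list}" unfolding words_def by auto
  then have "mu [] = 1" using assms(2) True unfolding is_dist_def by simp
  then have "total_correlation n mu = 0" using True \<open>words 0 = {[]}\<close>
    unfolding total_correlation_def entropy_def by simp
  then show ?thesis using True by (simp add: Let_def)
next
  case False
  then have npos: "n > 0" by simp
  define pi where "pi = iid_power n nu"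
  define W where "W = (words n :: 'a list set)"
  define C where "C = {(\<Sum>p\<in>words n \<times> words n. lam p * hamming n (fst p) (snd p)) | lam.
                        coupling n mu pi lam}"
  define F where "F c = 2 * (binary_entropy c + c * ln (real CARD('a))) * real n" for c
  define KS where "KS = {c \<in> {0..1}. total_correlation n mu \<le> F c}"
  have finW: "finite W" unfolding W_def by (rule finite_words)
  have cF: "continuous_on {0..1} F" unfolding F_def
    by (intro continuous_on_mult continuous_on_add continuous_on_const continuous_on_id bent_cont)
  have "closed KS" unfolding KS_def
    by (rule continuous_on_closed_Collect_le[OF continuous_on_const cF closed_atLeastAtMost])
  have CK: "C \<subseteq> KS"
  proof
    fix c assume "c \<in> C"
    then obtain lam where cp: "coupling n mu pi lam"
      and c: "c = (\<Sum>p\<in>words n \<times> words n. lam p * hamming n (fst p) (snd p))"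
      unfolding C_def by auto
    show "c \<in> KS" unfolding KS_def F_def c
      using cost_bounds[OF cp npos] main_coupling[OF assms(1) cp[unfolded pi_def] npos] by auto
  qed
  have Cne: "C \<noteq> {}"
  proof -
    define lam where "lam p = mu (fst p) * pi (snd p)" for p :: "'a list \<times> 'a list"
    have pinn: "pi y \<ge> 0" for y
      unfolding pi_def iid_power_def using assms(1) unfolding is_dist_def by (auto intro: prod_nonneg)
    have pis: "sum pi W = 1" unfolding pi_def W_def by (rule iid_sum[OF assms(1)])
    have mus: "sum mu W = 1" and munn: "\<And>x. x \<in> W \<Longrightarrow> mu x \<ge> 0"
      using assms(2) unfolding is_dist_def W_def by auto
    have "coupling n mu pi lam"
      unfolding coupling_def is_dist_def W_def[symmetric]
    proof (intro conjI ballI)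
      fix p assume "p \<in> W \<times> W"
      then show "0 \<le> lam p" unfolding lam_def using munn pinn by auto
    next
      show "(\<Sum>p\<in>W \<times> W. lam p) = 1"
      proof -
        have "(\<Sum>p\<in>W \<times> W. lam p) = (\<Sum>x\<in>W. \<Sum>y\<in>W. mu x * pi y)"
          unfolding lam_def by (simp add: sum.cartesian_product split_def)
        also have "\<dots> = sum mu W * sum pi W" by (simp add: sum_product)
        finally show ?thesis using mus pis by simp
      qed
    next
      fix x assume "x \<in> W"
      show "(\<Sum>y\<in>W. lam (x, y)) = mu x" unfolding lam_def using pis by (simp add: sum_distrib_left[symmetric])
    next
      fix y assume "y \<in> W"
      show "(\<Sum>x\<in>W. lam (x, y)) = pi y" unfolding lam_def using mus by (simp add: sum_distrib_right[symmetric])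
    qed
    then show ?thesis unfolding C_def by auto
  qed
  have "bdd_below C"
  proof
    fix c assume "c \<in> C"
    then show "0 \<le> c" using CK unfolding KS_def by auto
  qed
  have "Inf C \<in> KS"
    using closure_contains_Inf[OF Cne \<open>bdd_below C\<close>] closure_minimal[OF CK \<open>closed KS\<close>] by auto
  moreover have "dbar n mu (iid_power n nu) = Inf C" unfolding dbar_def C_def pi_def ..
  ultimately show ?thesis unfolding KS_def F_def Let_def by simp
qed

end
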